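(* Let $H$ be a complex Hilbert space, $\varphi,\psi:[0,1]\to\mathbb{R}$ continuous, and $A\in\mathbb{B}(H)$. Then $$\Big(\int_0^1\min\{|\varphi(t)+\psi(t)|,|\varphi(t)-\psi(t)|\}\,dt\Big)\omega(A)\le\int_0^1\omega_t(\varphi,\psi;A)\,dt\le\Big(\int_0^1\max\{|\varphi(t)+\psi(t)|,|\varphi(t)-\psi(t)|\}\,dt\Big)\omega(A).$$
   Context: $S_1(H)$ is the unit sphere of $H$, $\omega(T)=\sup_{x\in S_1(H)}|\langle Tx,x\rangle|$, and $\omega_t(\varphi,\psi;A)=\sup_{x\in S_1(H)}|\langle(\varphi(t)A+\psi(t)A^* )x,x\rangle|$. *)

theory Defs
  imports "HOL-Analysis.Analysis"
begin

text \<open>The inner product is linear in the first argument and conjugate-linear in the second;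
  the norm is induced by the inner product.\<close>

class complex_inner = real_normed_vector +
  fixes scaleC :: "complex \<Rightarrow> 'a \<Rightarrow> 'a"
    and cinner :: "'a \<Rightarrow> 'a \<Rightarrow> complex"
  assumes scaleC_add_right: "scaleC c (x + y) = scaleC c x + scaleC c y"
    and scaleC_add_left: "scaleC (c + d) x = scaleC c x + scaleC d x"
    and scaleC_scaleC: "scaleC c (scaleC d x) = scaleC (c * d) x"
    and scaleC_one: "scaleC 1 x = x"
    and scaleR_scaleC: "scaleR r x = scaleC (complex_of_real r) x"
    and cinner_conj_sym: "cinner x y = cnj (cinner y x)"
    and cinner_add_left: "cinner (x + y) z = cinner x z + cinner y z"
    and cinner_scaleC_left: "cinner (scaleC c x) y = c * cinner x y"
    and cinner_self_real: "Im (cinner x x) = 0"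
    and cinner_self_nonneg: "0 \<le> Re (cinner x x)"
    and cinner_self_eq_zero: "cinner x x = 0 \<longleftrightarrow> x = 0"
    and norm_eq_sqrt_cinner: "norm x = sqrt (Re (cinner x x))"

class chilbert_space = complex_inner + complete_space

definition bounded_clinear :: "('a::complex_inner \<Rightarrow> 'a) \<Rightarrow> bool" where
  "bounded_clinear T \<longleftrightarrow>
     (\<forall>x y. T (x + y) = T x + T y) \<and>
     (\<forall>c x. T (scaleC c x) = scaleC c (T x)) \<and>
     (\<exists>K. \<forall>x. norm (T x) \<le> norm x * K)"

definition adjoint :: "('a::complex_inner \<Rightarrow> 'a) \<Rightarrow> 'a \<Rightarrow> 'a" where
  "adjoint T = (SOME S. \<forall>x y. cinner (T x) y = cinner x (S y))"

text \<open>Numerical radius \<open>\<omega>(T) = sup_{x \<in> S_1(H)} |\<langle>T x, x\<rangle>|\<close>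
  (the \<open>0\<close> only fixes the value for the trivial space \<open>H = {0}\<close>; the values are nonnegative).\<close>
definition num_radius :: "('a::complex_inner \<Rightarrow> 'a) \<Rightarrow> real" where
  "num_radius T = Sup (insert 0 ((\<lambda>x. cmod (cinner (T x) x)) ` {x. norm x = 1}))"

definition omega_t :: "(real \<Rightarrow> real) \<Rightarrow> (real \<Rightarrow> real) \<Rightarrow> ('a::complex_inner \<Rightarrow> 'a) \<Rightarrow> real \<Rightarrow> real" where
  "omega_t \<phi> \<psi> A t = num_radius
     (\<lambda>x. scaleC (complex_of_real (\<phi> t)) (A x) + scaleC (complex_of_real (\<psi> t)) (adjoint A x))"

end

theory Submission
  imports Defs
begin

lemma cinner_add_right: "cinner x (y + z) = cinner x y + cinner (x::'a::complex_inner) z"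
  by (metis cinner_add_left cinner_conj_sym complex_cnj_add)
lemma cinner_scaleC_right: "cinner x (scaleC c y) = cnj c * cinner (x::'a::complex_inner) y"
  by (metis cinner_conj_sym cinner_scaleC_left complex_cnj_mult)
lemma cinner_zero_left[simp]: "cinner 0 (x::'a::complex_inner) = 0"
  by (metis add.right_neutral add_cancel_right_right cinner_add_left)
lemma cinner_zero_right[simp]: "cinner (x::'a::complex_inner) 0 = 0"
  by (metis cinner_conj_sym cinner_zero_left complex_cnj_zero)
lemma scaleC_minus1: "scaleC (-1) (x::'a::complex_inner) = - x"
  by (metis of_real_1 of_real_minus scaleR_minus1_left scaleR_scaleC)
lemma cinner_minus_left: "cinner (- x) y = - cinner (x::'a::complex_inner) y"
  using cinner_scaleC_left[of "-1" x y] by (simp add: scaleC_minus1)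
lemma cinner_minus_right: "cinner y (- x) = - cinner y (x::'a::complex_inner)"
  using cinner_scaleC_right[of y "-1" x] by (simp add: scaleC_minus1)
lemma cinner_diff_left: "cinner (x - y) z = cinner x z - cinner (y::'a::complex_inner) z"
  using cinner_add_left[of x "-y" z] by (simp add: cinner_minus_left)
lemma cinner_diff_right: "cinner z (x - y) = cinner z x - cinner z (y::'a::complex_inner)"
  using cinner_add_right[of z x "-y"] by (simp add: cinner_minus_right)
lemma cinner_self: "cinner x x = complex_of_real ((norm (x::'a::complex_inner))^2)"
proof -
  have "(norm x)^2 = Re (cinner x x)" using norm_eq_sqrt_cinner[of x] cinner_self_nonneg[of x] by simp
  then show ?thesis using cinner_self_real[of x] by (simp add: complex_eq_iff)
qed
lemma scaleC_minus_right: "scaleC c (- x) = - scaleC c (x::'a::complex_inner)"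
proof -
  have "scaleC c (- x) = scaleC c (scaleC (-1) x)" by (simp add: scaleC_minus1)
  also have "\<dots> = scaleC (-1) (scaleC c x)" by (simp add: scaleC_scaleC)
  finally show ?thesis by (simp add: scaleC_minus1)
qed
lemma scaleC_diff_right: "scaleC c (x - y) = scaleC c x - scaleC c (y::'a::complex_inner)"
  using scaleC_add_right[of c x "-y"] by (simp add: scaleC_minus_right)
lemma scaleC_zero_right[simp]: "scaleC c (0::'a::complex_inner) = 0"
  using scaleC_add_right[of c 0 0] by simp
lemma norm_scaleC: "norm (scaleC c (x::'a::complex_inner)) = cmod c * norm x"
proof -
  have "cinner (scaleC c x) (scaleC c x) = c * cnj c * cinner x x"
    by (simp add: cinner_scaleC_left cinner_scaleC_right)
  also have "\<dots> = complex_of_real ((cmod c)^2 * (norm x)^2)"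
  proof -
    have "c * cnj c = complex_of_real ((cmod c)^2)" using complex_norm_square[of c] by simp
    thus ?thesis by (simp add: cinner_self del: complex_mult_cnj of_real_power)
  qed
  finally have "complex_of_real ((norm (scaleC c x))^2) = complex_of_real ((cmod c)^2 * (norm x)^2)"
    by (simp only: cinner_self)
  hence "(norm (scaleC c x))^2 = (cmod c * norm x)^2"
    by (simp only: of_real_eq_iff power_mult_distrib)
  thus ?thesis by (simp add: power2_eq_iff_nonneg)
qed
lemma cauchy_schwarz: "cmod (cinner x y) \<le> norm x * norm (y::'a::complex_inner)"
proof (cases "y = 0")
  case True then show ?thesis by simp
next
  case False
  define W where "W = cinner x y"
  define Y where "Y = (norm y)^2"
  have Yp: "Y > 0" using False Y_def by simp
  define c where "c = W / complex_of_real Y"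
  have yx: "cinner y x = cnj W" using W_def cinner_conj_sym by metis
  have "cinner (x - scaleC c y) (x - scaleC c y)
      = cinner x x - cnj c * W - c * cnj W + c * cnj c * complex_of_real Y"
    by (simp add: cinner_diff_left cinner_diff_right cinner_scaleC_left cinner_scaleC_right
       yx W_def[symmetric] Y_def cinner_self[of y] algebra_simps del: of_real_power)
  also have "\<dots> = cinner x x - W * cnj W / complex_of_real Y"
    using Yp by (simp add: c_def field_simps del: complex_mult_cnj)
  also have "\<dots> = complex_of_real ((norm x)^2 - (cmod W)^2 / Y)"
    by (simp add: cinner_self complex_norm_square del: of_real_power complex_mult_cnj)
  finally have "0 \<le> (norm x)^2 - (cmod W)^2 / Y"
    by (metis cinner_self_nonneg Re_complex_of_real)
  hence "(cmod W)^2 \<le> (norm x)^2 * Y" using Yp by (simp add: field_simps)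
  hence "(cmod W)^2 \<le> (norm x * norm y)^2" by (simp add: Y_def power_mult_distrib)
  thus ?thesis using W_def by (meson norm_ge_zero power2_le_imp_le zero_le_mult_iff)
qed
lemma proj_expand:
  fixes x y :: "'a::complex_inner"
  assumes "y \<noteq> 0"
  shows "(norm (x - scaleC (cinner x y / complex_of_real ((norm y)^2)) y))^2
         = (norm x)^2 - (cmod (cinner x y))^2 / (norm y)^2"
proof -
  define W where "W = cinner x y"
  define Y where "Y = (norm y)^2"
  have Yp: "Y > 0" using assms Y_def by simp
  define c where "c = W / complex_of_real Y"
  have yx: "cinner y x = cnj W" using W_def cinner_conj_sym by metis
  have "cinner (x - scaleC c y) (x - scaleC c y)
      = cinner x x - cnj c * W - c * cnj W + c * cnj c * complex_of_real Y"
    by (simp add: cinner_diff_left cinner_diff_right cinner_scaleC_left cinner_scaleC_right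
       yx W_def[symmetric] Y_def cinner_self[of y] algebra_simps del: of_real_power)
  also have "\<dots> = cinner x x - W * cnj W / complex_of_real Y"
    using Yp by (simp add: c_def field_simps del: complex_mult_cnj)
  also have "\<dots> = complex_of_real ((norm x)^2 - (cmod W)^2 / Y)"
    by (simp add: cinner_self complex_norm_square del: of_real_power complex_mult_cnj)
  finally have "complex_of_real ((norm (x - scaleC c y))^2) = complex_of_real ((norm x)^2 - (cmod W)^2 / Y)"
    by (simp only: cinner_self)
  thus ?thesis unfolding c_def W_def Y_def by (simp only: of_real_eq_iff)
qed

lemma parallelogram:
  fixes u v :: "'a::complex_inner"
  shows "(norm (u + v))^2 + (norm (u - v))^2 = 2 * (norm u)^2 + 2 * (norm v)^2"
proof -
  have "cinner (u + v) (u + v) + cinner (u - v) (u - v) = 2 * cinner u u + 2 * cinner v v"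
    by (simp add: cinner_add_left cinner_add_right cinner_diff_left cinner_diff_right algebra_simps)
  hence "complex_of_real ((norm (u + v))^2 + (norm (u - v))^2) = complex_of_real (2 * (norm u)^2 + 2 * (norm v)^2)"
    by (simp add: cinner_self del: of_real_power)
  thus ?thesis by (simp only: of_real_eq_iff)
qed

lemma riesz:
  fixes f :: "'a::chilbert_space \<Rightarrow> complex"
  assumes add: "\<And>x y. f (x + y) = f x + f y" and sc: "\<And>c x. f (scaleC c x) = c * f x"
    and bnd: "\<And>x. cmod (f x) \<le> norm x * K"
  shows "\<exists>w. \<forall>x. f x = cinner x w"
proof (cases "\<forall>x. f x = 0")
  case True then show ?thesis by (intro exI[of _ 0]) simp
next
  case False
  then obtain x0 where fx0: "f x0 \<noteq> 0" by blast
  have f0: "f 0 = 0" using add[of 0 0] by simp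
  have fminus: "f (- x) = - f x" for x using sc[of "-1" x] by (simp add: scaleC_minus1)
  have fdiff: "f (x - y) = f x - f y" for x y using add[of x "-y"] fminus[of y] by simp
  have fscaleR: "f (scaleR r x) = complex_of_real r * f x" for r x by (simp add: scaleR_scaleC sc)
  define N where "N = {x. f x = 0}"
  have closedN: "closed N"
    unfolding closed_sequential_limits
  proof (intro allI impI, elim conjE)
    fix s l assume sN: "\<forall>n. s n \<in> N" and lim: "s \<longlonglongrightarrow> l"
    have "(\<lambda>n. norm (s n - l)) \<longlonglongrightarrow> 0"
      using lim by (simp add: LIM_zero tendsto_norm_zero)
    hence t: "(\<lambda>n. norm (s n - l) * K) \<longlonglongrightarrow> 0"
      using tendsto_mult[OF _ tendsto_const, of "\<lambda>n. norm (s n - l)" 0 sequentially K] by simp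
    have "\<forall>n. cmod (f l) \<le> norm (s n - l) * K"
    proof
      fix n
      have "f l = - f (s n - l)" using sN fdiff[of "s n" l] by (simp add: N_def)
      thus "cmod (f l) \<le> norm (s n - l) * K" using bnd[of "s n - l"] by simp
    qed
    hence "cmod (f l) \<le> 0" using LIMSEQ_le_const[OF t] by blast
    thus "l \<in> N" by (simp add: N_def)
  qed
  have midN: "scaleR (1/2) (a + b) \<in> N" if "a \<in> N" "b \<in> N" for a b
    using that by (simp add: N_def fscaleR add)
  have addN: "a + b \<in> N" if "a \<in> N" "b \<in> N" for a b
    using that by (simp add: N_def add)
  have scN: "scaleC c a \<in> N" if "a \<in> N" for a c
    using that by (simp add: N_def sc)
  define D where "D = (\<lambda>n. (norm (x0 - n))^2) ` N"
  define d2 where "d2 = Inf D"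
  have Dne: "D \<noteq> {}" using f0 by (auto simp: D_def N_def)
  have Dbdd: "bdd_below D" unfolding D_def by (rule bdd_belowI[of _ 0]) auto
  have d2le: "d2 \<le> (norm (x0 - n))^2" if "n \<in> N" for n
    unfolding d2_def by (rule cInf_lower[OF _ Dbdd]) (use that D_def in auto)
  have d2nn: "0 \<le> d2" unfolding d2_def by (rule cInf_greatest[OF Dne]) (auto simp: D_def)
  have "\<forall>k. \<exists>n\<in>N. (norm (x0 - n))^2 < d2 + inverse (real (Suc k))"
  proof
    fix k
    have "Inf D < d2 + inverse (real (Suc k))" unfolding d2_def by simp
    from cInf_lessD[OF Dne this] show "\<exists>n\<in>N. (norm (x0 - n))^2 < d2 + inverse (real (Suc k))"
      by (auto simp: D_def)
  qed
  then obtain s where sN: "\<And>k. s k \<in> N"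
    and sl: "\<And>k. (norm (x0 - s k))^2 < d2 + inverse (real (Suc k))"
    by metis
  have cauchy: "Cauchy s"
  proof (rule CauchyI)
    fix e :: real assume e: "0 < e"
    obtain M :: nat where M: "4 / e^2 < real M" using reals_Archimedean2 by blast
    have "\<forall>m\<ge>M. \<forall>n\<ge>M. norm (s m - s n) < e"
    proof (intro allI impI)
      fix m n assume mM: "m \<ge> M" and nM: "n \<ge> M"
      have par: "(norm ((x0 - s m) + (x0 - s n)))^2 + (norm ((x0 - s m) - (x0 - s n)))^2
          = 2 * (norm (x0 - s m))^2 + 2 * (norm (x0 - s n))^2" by (rule parallelogram)
      have e1: "(x0 - s m) + (x0 - s n) = scaleR 2 (x0 - scaleR (1/2) (s m + s n))"
        by (simp add: algebra_simps scaleR_2)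
      have e2: "(x0 - s m) - (x0 - s n) = s n - s m" by simp
      have "(norm ((x0 - s m) + (x0 - s n)))^2 = 4 * (norm (x0 - scaleR (1/2) (s m + s n)))^2"
        unfolding e1 by (simp add: power_mult_distrib)
      moreover have "d2 \<le> (norm (x0 - scaleR (1/2) (s m + s n)))^2"
        by (rule d2le[OF midN[OF sN sN]])
      ultimately have "(norm (s n - s m))^2 \<le> 2 * (norm (x0 - s m))^2 + 2 * (norm (x0 - s n))^2 - 4 * d2"
        using par[unfolded e2] by linarith
      also have "\<dots> < 2 * inverse (real (Suc m)) + 2 * inverse (real (Suc n))"
        using sl[of m] sl[of n] by linarith
      also have "\<dots> \<le> 4 * inverse (real (Suc M))"
      proof -
        have "inverse (real (Suc m)) \<le> inverse (real (Suc M))" using mM by (simp add: field_simps)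
        moreover have "inverse (real (Suc n)) \<le> inverse (real (Suc M))" using nM by (simp add: field_simps)
        ultimately show ?thesis by linarith
      qed
      also have "\<dots> < e^2"
      proof -
        have "4 < e^2 * real M" using M e by (simp add: field_simps)
        hence "4 < e^2 * real (Suc M)" using e by (simp add: algebra_simps) (smt (verit) zero_less_power)
        thus ?thesis by (simp add: field_simps)
      qed
      finally have "(norm (s m - s n))^2 < e^2" by (simp add: norm_minus_commute)
      thus "norm (s m - s n) < e" using e by (meson less_eq_real_def power2_less_imp_less)
    qed
    thus "\<exists>M. \<forall>m\<ge>M. \<forall>n\<ge>M. norm (s m - s n) < e" by blast
  qed
  then obtain ns where lim: "s \<longlonglongrightarrow> ns" using Cauchy_convergent convergent_def by blast
  have nsN: "ns \<in> N" using closedN sN lim closed_sequential_limits by blast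
  define z where "z = x0 - ns"
  have fz: "f z = f x0" using nsN by (simp add: z_def fdiff N_def)
  have znz: "z \<noteq> 0" using fz fx0 f0 by auto
  have zmin: "(norm z)^2 \<le> d2"
  proof (rule LIMSEQ_le)
    show "(\<lambda>k. (norm (x0 - s k))^2) \<longlonglongrightarrow> (norm z)^2"
      unfolding z_def by (intro tendsto_intros lim)
    show "(\<lambda>k. d2 + inverse (real (Suc k))) \<longlonglongrightarrow> d2"
      using tendsto_add[OF tendsto_const LIMSEQ_inverse_real_of_nat, of d2] by simp
    show "\<exists>N. \<forall>n\<ge>N. (norm (x0 - s n))^2 \<le> d2 + inverse (real (Suc n))"
      using sl less_imp_le by blast
  qed
  have orth: "cinner z n = 0" if nN: "n \<in> N" for n
  proof (cases "n = 0")
    case True then show ?thesis by simp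
  next
    case False
    define c where "c = cinner z n / complex_of_real ((norm n)^2)"
    have zc: "z - scaleC c n = x0 - (ns + scaleC c n)" by (simp add: z_def)
    have "(norm z)^2 \<le> (norm (z - scaleC c n))^2"
      unfolding zc using d2le[OF addN[OF nsN scN[OF nN]], of c] zmin by linarith
    also have "\<dots> = (norm z)^2 - (cmod (cinner z n))^2 / (norm n)^2"
      unfolding c_def by (rule proj_expand[OF False])
    finally have "(cmod (cinner z n))^2 / (norm n)^2 \<le> 0" by simp
    hence "(cmod (cinner z n))^2 \<le> 0" using False by (simp add: divide_le_0_iff)
    thus ?thesis by simp
  qed
  define Z where "Z = complex_of_real ((norm z)^2)"
  have Znz: "Z \<noteq> 0" using znz by (simp add: Z_def)
  have cZ: "cnj Z = Z" by (simp add: Z_def)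
  define w where "w = scaleC (cnj (f z / Z)) z"
  have "f x = cinner x w" for x
  proof -
    define q where "q = f x / f z"
    have fzn: "f z \<noteq> 0" using fz fx0 by simp
    have "x - scaleC q z \<in> N" using fzn by (simp add: N_def fdiff sc q_def)
    hence "cinner (x - scaleC q z) z = 0"
      using orth by (metis cinner_conj_sym complex_cnj_zero)
    hence xz: "cinner x z = q * Z"
      by (simp add: cinner_diff_left cinner_scaleC_left Z_def cinner_self del: of_real_power)
    have "cinner x w = f z / Z * cinner x z" by (simp add: w_def cinner_scaleC_right)
    also have "\<dots> = f x" using xz Znz fzn by (simp add: q_def field_simps)
    finally show ?thesis by simp
  qed
  thus ?thesis by blast
qed

lemma adjoint_prop:
  fixes A :: "'a::chilbert_space \<Rightarrow> 'a"
  assumes "bounded_clinear A"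
  shows "cinner (A x) y = cinner x (adjoint A y)"
proof -
  obtain K where K: "\<And>x. norm (A x) \<le> norm x * K"
    and add: "\<And>x y. A (x + y) = A x + A y" and sc: "\<And>c x. A (scaleC c x) = scaleC c (A x)"
    using assms unfolding bounded_clinear_def by blast
  have "\<forall>y. \<exists>w. \<forall>x. cinner (A x) y = cinner x w"
  proof
    fix y
    show "\<exists>w. \<forall>x. cinner (A x) y = cinner x w"
    proof (rule riesz[where K = "K * norm y"])
      show "cinner (A (x + z)) y = cinner (A x) y + cinner (A z) y" for x z
        by (simp add: add cinner_add_left)
      show "cinner (A (scaleC c x)) y = c * cinner (A x) y" for c x
        by (simp add: sc cinner_scaleC_left)
      show "cmod (cinner (A x) y) \<le> norm x * (K * norm y)" for x
      proof -
        have "cmod (cinner (A x) y) \<le> norm (A x) * norm y" by (rule cauchy_schwarz)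
        also have "\<dots> \<le> norm x * K * norm y" using K[of x] by (simp add: mult_right_mono)
        finally show ?thesis by (simp add: mult.assoc)
      qed
    qed
  qed
  then obtain S where "\<forall>y x. cinner (A x) y = cinner x (S y)" by metis
  hence "\<exists>S. \<forall>x y. cinner (A x) y = cinner x (S y)" by blast
  from someI_ex[OF this] show ?thesis unfolding adjoint_def by blast
qed

lemma mod_bounds:
  fixes a b :: real and z :: complex
  shows "min \<bar>a + b\<bar> \<bar>a - b\<bar> * cmod z \<le> cmod (complex_of_real a * z + complex_of_real b * cnj z)"
    and "cmod (complex_of_real a * z + complex_of_real b * cnj z) \<le> max \<bar>a + b\<bar> \<bar>a - b\<bar> * cmod z"
proof -
  define w where "w = complex_of_real a * z + complex_of_real b * cnj z"
  define u where "u = Re z"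
  define v where "v = Im z"
  have rw: "Re w = (a + b) * u" and iw: "Im w = (a - b) * v"
    by (simp_all add: w_def u_def v_def algebra_simps)
  have w2: "(cmod w)^2 = (a + b)^2 * u^2 + (a - b)^2 * v^2"
    by (simp add: cmod_power2 rw iw power_mult_distrib)
  have z2: "(cmod z)^2 = u^2 + v^2" by (simp add: u_def v_def cmod_power2)
  define m where "m = min \<bar>a + b\<bar> \<bar>a - b\<bar>"
  define M where "M = max \<bar>a + b\<bar> \<bar>a - b\<bar>"
  have m0: "0 \<le> m" and M0: "0 \<le> M" by (auto simp: m_def M_def)
  have m1: "m^2 \<le> (a + b)^2" and m2: "m^2 \<le> (a - b)^2"
    using power_mono[of m "\<bar>a + b\<bar>" 2] power_mono[of m "\<bar>a - b\<bar>" 2] m0 by (simp_all add: m_def)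
  have M1: "(a + b)^2 \<le> M^2" and M2: "(a - b)^2 \<le> M^2"
    using power_mono[of "\<bar>a + b\<bar>" M 2] power_mono[of "\<bar>a - b\<bar>" M 2] by (simp_all add: M_def)
  have "(m * cmod z)^2 \<le> (cmod w)^2"
    unfolding w2 power_mult_distrib z2
    using mult_right_mono[OF m1, of "u^2"] mult_right_mono[OF m2, of "v^2"]
    by (simp add: algebra_simps)
  thus "min \<bar>a + b\<bar> \<bar>a - b\<bar> * cmod z \<le> cmod (complex_of_real a * z + complex_of_real b * cnj z)"
    unfolding m_def w_def by (meson norm_ge_zero power2_le_imp_le)
  have "(cmod w)^2 \<le> (M * cmod z)^2"
    unfolding w2 power_mult_distrib z2
    using mult_right_mono[OF M1, of "u^2"] mult_right_mono[OF M2, of "v^2"]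
    by (simp add: algebra_simps)
  thus "cmod (complex_of_real a * z + complex_of_real b * cnj z) \<le> max \<bar>a + b\<bar> \<bar>a - b\<bar> * cmod z"
    unfolding M_def w_def using M0 M_def by (meson mult_nonneg_nonneg norm_ge_zero power2_le_imp_le)
qed

lemma lip_bound:
  fixes a b a' b' :: real and z :: complex
  shows "cmod (complex_of_real a * z + complex_of_real b * cnj z)
     \<le> cmod (complex_of_real a' * z + complex_of_real b' * cnj z) + (\<bar>a - a'\<bar> + \<bar>b - b'\<bar>) * cmod z"
proof -
  have eq: "complex_of_real a * z + complex_of_real b * cnj z
     = (complex_of_real a' * z + complex_of_real b' * cnj z)
       + (complex_of_real (a - a') * z + complex_of_real (b - b') * cnj z)"
    by (simp add: algebra_simps)
  have "cmod (complex_of_real (a - a') * z + complex_of_real (b - b') * cnj z)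
     \<le> cmod (complex_of_real (a - a') * z) + cmod (complex_of_real (b - b') * cnj z)"
    by (rule norm_triangle_ineq)
  also have "\<dots> = (\<bar>a - a'\<bar> + \<bar>b - b'\<bar>) * cmod z"
    by (simp only: norm_mult norm_of_real complex_mod_cnj) (simp add: algebra_simps)
  finally show ?thesis unfolding eq using norm_triangle_ineq by (smt (verit))
qed

theorem corollary4p4:
  fixes \<phi> \<psi> :: "real \<Rightarrow> real" and A :: "'a::chilbert_space \<Rightarrow> 'a"
  assumes "continuous_on {0..1} \<phi>" and "continuous_on {0..1} \<psi>"
    and "bounded_clinear A"
  shows "integral {0..1} (\<lambda>t. min \<bar>\<phi> t + \<psi> t\<bar> \<bar>\<phi> t - \<psi> t\<bar>) * num_radius A
           \<le> integral {0..1} (\<lambda>t. omega_t \<phi> \<psi> A t)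
       \<and> integral {0..1} (\<lambda>t. omega_t \<phi> \<psi> A t)
           \<le> integral {0..1} (\<lambda>t. max \<bar>\<phi> t + \<psi> t\<bar> \<bar>\<phi> t - \<psi> t\<bar>) * num_radius A"
proof -
  obtain K where K: "\<And>x. norm (A x) \<le> norm x * K"
    using assms(3) unfolding bounded_clinear_def by blast
  define S where "S = {x::'a. norm x = 1}"
  define h where "h x = cmod (cinner (A x) x)" for x
  define K' where "K' = max K 0"
  have K'0: "0 \<le> K'" by (simp add: K'_def)
  have hK: "h x \<le> K'" if "x \<in> S" for x
  proof -
    have "h x \<le> norm (A x) * norm x" unfolding h_def by (rule cauchy_schwarz)
    also have "\<dots> \<le> K" using K[of x] that by (simp add: S_def)
    finally show ?thesis by (simp add: K'_def)
  qed
  have h0: "0 \<le> h x" for x by (simp add: h_def)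
  define g where "g a b x = cmod (complex_of_real a * cinner (A x) x + complex_of_real b * cnj (cinner (A x) x))" for a b x
  define G where "G a b = Sup (insert 0 (g a b ` S))" for a b
  have innerT: "cinner (scaleC (complex_of_real a) (A x) + scaleC (complex_of_real b) (adjoint A x)) x
      = complex_of_real a * cinner (A x) x + complex_of_real b * cnj (cinner (A x) x)" for a b x
  proof -
    have "cinner (adjoint A x) x = cnj (cinner (A x) x)"
      using adjoint_prop[OF assms(3), of x x] cinner_conj_sym[of "adjoint A x" x] by simp
    thus ?thesis by (simp add: cinner_add_left cinner_scaleC_left)
  qed
  have omega_eq: "omega_t \<phi> \<psi> A t = G (\<phi> t) (\<psi> t)" for t
    unfolding omega_t_def num_radius_def G_def S_def g_def innerT ..
  have wA: "num_radius A = Sup (insert 0 (h ` S))" by (simp add: num_radius_def h_def S_def)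
  have bddA: "bdd_above (insert 0 (h ` S))"
    using hK K'0 by (intro bdd_aboveI[of _ K']) auto
  have wA0: "0 \<le> num_radius A" unfolding wA by (rule cSup_upper[OF _ bddA]) simp
  have hw: "h x \<le> num_radius A" if "x \<in> S" for x
    unfolding wA by (rule cSup_upper[OF _ bddA]) (use that in simp)
  have gle: "g a b x \<le> (\<bar>a\<bar> + \<bar>b\<bar>) * K'" if "x \<in> S" for a b x
  proof -
    have "g a b x \<le> g 0 0 x + (\<bar>a - 0\<bar> + \<bar>b - 0\<bar>) * h x"
      unfolding g_def h_def by (rule lip_bound)
    also have "\<dots> \<le> (\<bar>a\<bar> + \<bar>b\<bar>) * K'"
      using hK[OF that] by (simp add: g_def mult_left_mono)
    finally show ?thesis .
  qed
  have bddG: "bdd_above (insert 0 (g a b ` S))" for a b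
    using gle K'0 by (intro bdd_aboveI[of _ "(\<bar>a\<bar> + \<bar>b\<bar>) * K'"]) auto
  have Gup: "g a b x \<le> G a b" if "x \<in> S" for a b x
    unfolding G_def by (rule cSup_upper[OF _ bddG]) (use that in simp)
  have G0: "0 \<le> G a b" for a b
    unfolding G_def by (rule cSup_upper[OF _ bddG]) simp
  have pt_upper: "G a b \<le> max \<bar>a + b\<bar> \<bar>a - b\<bar> * num_radius A" for a b
    unfolding G_def
  proof (rule cSup_least)
    show "insert 0 (g a b ` S) \<noteq> {}" by simp
    fix y assume "y \<in> insert 0 (g a b ` S)"
    then consider "y = 0" | x where "x \<in> S" "y = g a b x" by blast
    then show "y \<le> max \<bar>a + b\<bar> \<bar>a - b\<bar> * num_radius A"
    proof cases
      case 1 then show ?thesis using wA0 by simp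
    next
      case 2
      have "y \<le> max \<bar>a + b\<bar> \<bar>a - b\<bar> * h x"
        unfolding 2 g_def h_def by (rule mod_bounds(2))
      also have "\<dots> \<le> max \<bar>a + b\<bar> \<bar>a - b\<bar> * num_radius A"
        using hw[OF 2(1)] by (simp add: mult_left_mono)
      finally show ?thesis .
    qed
  qed
  have pt_lower: "min \<bar>a + b\<bar> \<bar>a - b\<bar> * num_radius A \<le> G a b" for a b
  proof (cases "min \<bar>a + b\<bar> \<bar>a - b\<bar> = 0")
    case True then show ?thesis using G0 by simp
  next
    case False
    define m where "m = min \<bar>a + b\<bar> \<bar>a - b\<bar>"
    have mpos: "0 < m"
    proof -
      have "0 \<le> m" by (simp add: m_def)
      moreover have "m \<noteq> 0" using False m_def by metis
      ultimately show ?thesis by linarith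
    qed
    have "num_radius A \<le> G a b / m"
      unfolding wA
    proof (rule cSup_least)
      show "insert 0 (h ` S) \<noteq> {}" by simp
      fix y assume "y \<in> insert 0 (h ` S)"
      then consider "y = 0" | x where "x \<in> S" "y = h x" by blast
      then show "y \<le> G a b / m"
      proof cases
        case 1 then show ?thesis using G0 mpos by simp
      next
        case 2
        have "m * h x \<le> g a b x"
          unfolding m_def g_def h_def by (rule mod_bounds(1))
        also have "\<dots> \<le> G a b" by (rule Gup[OF 2(1)])
        finally show ?thesis using mpos 2 by (simp add: field_simps mult.commute)
      qed
    qed
    thus ?thesis using mpos by (simp add: m_def field_simps mult.commute)
  qed
  have Glip: "G a b \<le> G a' b' + (\<bar>a - a'\<bar> + \<bar>b - b'\<bar>) * K'" for a b a' b'
    unfolding G_def[of a b]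
  proof (rule cSup_least)
    show "insert 0 (g a b ` S) \<noteq> {}" by simp
    fix y assume "y \<in> insert 0 (g a b ` S)"
    then consider "y = 0" | x where "x \<in> S" "y = g a b x" by blast
    then show "y \<le> G a' b' + (\<bar>a - a'\<bar> + \<bar>b - b'\<bar>) * K'"
    proof cases
      case 1 then show ?thesis using G0[of a' b'] K'0 by simp
    next
      case 2
      have "y \<le> g a' b' x + (\<bar>a - a'\<bar> + \<bar>b - b'\<bar>) * h x"
        unfolding 2 g_def h_def by (rule lip_bound)
      also have "\<dots> \<le> G a' b' + (\<bar>a - a'\<bar> + \<bar>b - b'\<bar>) * K'"
        using Gup[OF 2(1), of a' b'] hK[OF 2(1)] by (intro add_mono mult_left_mono) auto
      finally show ?thesis .
    qed
  qed
  define F where "F t = G (\<phi> t) (\<psi> t)" for t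
  have contF: "continuous_on {0..1} F"
    unfolding continuous_on_def
  proof
    fix x :: real assume x: "x \<in> {0..1}"
    have px: "(\<phi> \<longlongrightarrow> \<phi> x) (at x within {0..1})" using assms(1) x continuous_on_def by blast
    have qx: "(\<psi> \<longlongrightarrow> \<psi> x) (at x within {0..1})" using assms(2) x continuous_on_def by blast
    have bound: "norm (F t - F x) \<le> (\<bar>\<phi> t - \<phi> x\<bar> + \<bar>\<psi> t - \<psi> x\<bar>) * K'" for t
      using Glip[of "\<phi> t" "\<psi> t" "\<phi> x" "\<psi> x"] Glip[of "\<phi> x" "\<psi> x" "\<phi> t" "\<psi> t"]
      by (simp add: F_def abs_minus_commute)
    have "((\<lambda>t. (\<bar>\<phi> t - \<phi> x\<bar> + \<bar>\<psi> t - \<psi> x\<bar>) * K') \<longlongrightarrow> (\<bar>\<phi> x - \<phi> x\<bar> + \<bar>\<psi> x - \<psi> x\<bar>) * K')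
        (at x within {0..1})"
      by (intro tendsto_intros px qx)
    hence "((\<lambda>t. (\<bar>\<phi> t - \<phi> x\<bar> + \<bar>\<psi> t - \<psi> x\<bar>) * K') \<longlongrightarrow> 0) (at x within {0..1})" by simp
    hence "((\<lambda>t. F t - F x) \<longlongrightarrow> 0) (at x within {0..1})"
      by (rule Lim_null_comparison[rotated]) (rule always_eventually, use bound in simp)
    thus "(F \<longlongrightarrow> F x) (at x within {0..1})" by (simp add: LIM_zero_iff)
  qed
  have intO: "(\<lambda>t. omega_t \<phi> \<psi> A t) integrable_on {0..1}"
    using integrable_continuous_interval[OF contF] unfolding omega_eq F_def[abs_def] .
  have intm: "(\<lambda>t. min \<bar>\<phi> t + \<psi> t\<bar> \<bar>\<phi> t - \<psi> t\<bar> * num_radius A) integrable_on {0..1}"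
    by (intro integrable_continuous_interval continuous_intros assms)
  have intM: "(\<lambda>t. max \<bar>\<phi> t + \<psi> t\<bar> \<bar>\<phi> t - \<psi> t\<bar> * num_radius A) integrable_on {0..1}"
    by (intro integrable_continuous_interval continuous_intros assms)
  have "integral {0..1} (\<lambda>t. min \<bar>\<phi> t + \<psi> t\<bar> \<bar>\<phi> t - \<psi> t\<bar>) * num_radius A
      = integral {0..1} (\<lambda>t. min \<bar>\<phi> t + \<psi> t\<bar> \<bar>\<phi> t - \<psi> t\<bar> * num_radius A)" by simp
  also have "\<dots> \<le> integral {0..1} (\<lambda>t. omega_t \<phi> \<psi> A t)"
    by (rule integral_le[OF intm intO]) (simp add: omega_eq pt_lower)
  finally have L: "integral {0..1} (\<lambda>t. min \<bar>\<phi> t + \<psi> t\<bar> \<bar>\<phi> t - \<psi> t\<bar>) * num_radius A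
      \<le> integral {0..1} (\<lambda>t. omega_t \<phi> \<psi> A t)" .
  have "integral {0..1} (\<lambda>t. omega_t \<phi> \<psi> A t)
      \<le> integral {0..1} (\<lambda>t. max \<bar>\<phi> t + \<psi> t\<bar> \<bar>\<phi> t - \<psi> t\<bar> * num_radius A)"
    by (rule integral_le[OF intO intM]) (simp add: omega_eq pt_upper)
  also have "\<dots> = integral {0..1} (\<lambda>t. max \<bar>\<phi> t + \<psi> t\<bar> \<bar>\<phi> t - \<psi> t\<bar>) * num_radius A" by simp
  finally show ?thesis using L by blast
qed

end
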